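(* Let $X=\{a,b\}$ and consider the following commutative Frobenius objects in $\mathbf{Rel}$ on $X$: (1) $\eta=\varepsilon=\{a\}$, $\tilde\mu(a,a)=\{a\}$, $\tilde\mu(a,b)=\tilde\mu(b,a)=\{b\}$, $\tilde\mu(b,b)=\{a\}$; (2) $\eta=\varepsilon=\{a\}$, same as (1) except $\tilde\mu(b,b)=\{a,b\}$; (3) $\eta=\{a\}$, $\varepsilon=\{b\}$, $\tilde\mu(a,a)=\{a\}$, $\tilde\mu(a,b)=\tilde\mu(b,a)=\{b\}$, $\tilde\mu(b,b)=\{a\}$; (4) $\eta=\{a\}$, $\varepsilon=\{b\}$, same as (3) except $\tilde\mu(b,b)=\emptyset$; (5) $\eta=\varepsilon=\{a,b\}$, $\tilde\mu(a,a)=\{a\}$, $\tilde\mu(b,b)=\{b\}$, $\tilde\mu(a,b)=\tilde\mu(b,a)=\emptyset$. Then, for integers $g\ge 0$, their partition functions are: for (1), (2), (5), $Z(\Sigma_g)=T$ for all $g$; for (3), $Z(\Sigma_g)=T$ if and only if $g$ is odd; for (4), $Z(\Sigma_g)=T$ if and only if $g=1$.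
   Context: $\mathbf{Rel}$ is the symmetric monoidal category of sets and relations ($S\circ R=\{(x,z):\exists y,(x,y)\in R,(y,z)\in S\}$, identities are diagonals, product is Cartesian product, unit $\{\bullet\}$). A relation $R\subseteq X\times Y$ is identified with $\tilde R:X\to\mathcal{P}(Y)$. A Frobenius object in $\mathbf{Rel}$ is a set $X$ with unit $\eta\subseteq X$ (relation $\{\bullet\}\to X$), counit $\varepsilon\subseteq X$ (relation $X\to\{\bullet\}$) and multiplication $\mu$ (relation $X\times X\to X$, with map $\tilde\mu$) satisfying unitality, associativity, and nondegeneracy: there is a (unique) relation $\beta:\{\bullet\}\to X\times X$ with $(\varepsilon\times\mathbf{1})\circ(\mu\times\mathbf{1})\circ(\mathbf{1}\times\beta)=(\mathbf{1}\times\varepsilon)\circ(\mathbf{1}\times\mu)\circ(\beta\times\mathbf{1})=\mathbf{1}$. The comultiplication is $\delta=(\mathbf{1}\times\mu)\circ(\beta\times\mathbf{1})$. Commutative means $\tilde\mu(x,y)=\tilde\mu(y,x)$. The partition function on the closed orientable surface of genus $g$ is $Z(\Sigma_g)=\varepsilon\circ(\mu\circ\delta)^g\circ\eta\in\{\emptyset,\{\bullet\}\}$, with $\emptyset$ read as $F$ and $\{\bullet\}$ as $T$. *)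

theory Defs
  imports Main
begin

text \<open>A relation from X to Y is a set of pairs. The singleton object is the type unit.
  Composition in the paper's order: S \<circ>r R = {(x,z). \<exists>y. (x,y)\<in>R \<and> (y,z)\<in>S} = R O S.\<close>

definition rcomp :: "('b \<times> 'c) set \<Rightarrow> ('a \<times> 'b) set \<Rightarrow> ('a \<times> 'c) set" (infixr "\<circ>r" 75)
  where "S \<circ>r R = R O S"

definition tens :: "('a \<times> 'b) set \<Rightarrow> ('c \<times> 'd) set \<Rightarrow> (('a \<times> 'c) \<times> ('b \<times> 'd)) set"
  (infixr "\<otimes>r" 80)
  where "R \<otimes>r S = {((x,y),(x',y')). (x,x') \<in> R \<and> (y,y') \<in> S}"

definition assoc :: "((('a \<times> 'b) \<times> 'c) \<times> ('a \<times> ('b \<times> 'c))) set"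
  where "assoc = {(((x,y),z),(x,(y,z))) | x y z. True}"

definition lunit :: "((unit \<times> 'a) \<times> 'a) set"
  where "lunit = {(((),x),x) | x. True}"

definition runit :: "(('a \<times> unit) \<times> 'a) set"
  where "runit = {((x,()),x) | x. True}"

text \<open>Unit \<eta> : {\<bullet>} \<rightarrow> X, counit \<epsilon> : X \<rightarrow> {\<bullet>}, multiplication \<mu> : X\<times>X \<rightarrow> X,
  given by a subset of X, a subset of X and the map \<mu>~ : X \<times> X \<rightarrow> P(X).\<close>

definition unit_rel :: "'a set \<Rightarrow> (unit \<times> 'a) set"
  where "unit_rel E = {((),x) | x. x \<in> E}"

definition counit_rel :: "'a set \<Rightarrow> ('a \<times> unit) set"
  where "counit_rel E = {(x,()) | x. x \<in> E}"

definition mult_rel :: "('a \<Rightarrow> 'a \<Rightarrow> 'a set) \<Rightarrow> (('a \<times> 'a) \<times> 'a) set"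
  where "mult_rel m = {((x,y),z) | x y z. z \<in> m x y}"

definition nondeg_eqs ::
  "('a \<times> unit) set \<Rightarrow> (('a \<times> 'a) \<times> 'a) set \<Rightarrow> (unit \<times> ('a \<times> 'a)) set \<Rightarrow> bool"
  where "nondeg_eqs \<epsilon> \<mu> \<beta> \<longleftrightarrow>
     lunit \<circ>r (\<epsilon> \<otimes>r Id) \<circ>r (\<mu> \<otimes>r Id) \<circ>r converse assoc \<circ>r (Id \<otimes>r \<beta>) \<circ>r converse runit = Id
   \<and> runit \<circ>r (Id \<otimes>r \<epsilon>) \<circ>r (Id \<otimes>r \<mu>) \<circ>r assoc \<circ>r (\<beta> \<otimes>r Id) \<circ>r converse lunit = Id"

definition frobenius_object ::
  "(unit \<times> 'a) set \<Rightarrow> ('a \<times> unit) set \<Rightarrow> (('a \<times> 'a) \<times> 'a) set \<Rightarrow> bool"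
  where "frobenius_object \<eta> \<epsilon> \<mu> \<longleftrightarrow>
     \<comment> \<open>unitality\<close>
     \<mu> \<circ>r (\<eta> \<otimes>r Id) \<circ>r converse lunit = Id
   \<and> \<mu> \<circ>r (Id \<otimes>r \<eta>) \<circ>r converse runit = Id
     \<comment> \<open>associativity\<close>
   \<and> \<mu> \<circ>r (\<mu> \<otimes>r Id) = \<mu> \<circ>r (Id \<otimes>r \<mu>) \<circ>r assoc
     \<comment> \<open>nondegeneracy\<close>
   \<and> (\<exists>!\<beta>. nondeg_eqs \<epsilon> \<mu> \<beta>)"

definition frob_beta :: "('a \<times> unit) set \<Rightarrow> (('a \<times> 'a) \<times> 'a) set \<Rightarrow> (unit \<times> ('a \<times> 'a)) set"
  where "frob_beta \<epsilon> \<mu> = (THE \<beta>. nondeg_eqs \<epsilon> \<mu> \<beta>)"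

text \<open>Comultiplication \<delta> = (1 \<times> \<mu>) \<circ> (\<beta> \<times> 1), with the unitor/associator made explicit.\<close>
definition comult :: "('a \<times> unit) set \<Rightarrow> (('a \<times> 'a) \<times> 'a) set \<Rightarrow> ('a \<times> ('a \<times> 'a)) set"
  where "comult \<epsilon> \<mu> = (Id \<otimes>r \<mu>) \<circ>r assoc \<circ>r (frob_beta \<epsilon> \<mu> \<otimes>r Id) \<circ>r converse lunit"

definition commutative_mult :: "('a \<Rightarrow> 'a \<Rightarrow> 'a set) \<Rightarrow> bool"
  where "commutative_mult m \<longleftrightarrow> (\<forall>x y. m x y = m y x)"

text \<open>Partition function Z(\<Sigma>_g) = \<epsilon> \<circ> (\<mu> \<circ> \<delta>)^g \<circ> \<eta>; a relation {\<bullet>} \<rightarrow> {\<bullet>}.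
  The value T corresponds to {((),())}, F to {}.\<close>
definition partition_fn ::
  "(unit \<times> 'a) set \<Rightarrow> ('a \<times> unit) set \<Rightarrow> (('a \<times> 'a) \<times> 'a) set \<Rightarrow> nat \<Rightarrow> (unit \<times> unit) set"
  where "partition_fn \<eta> \<epsilon> \<mu> g = \<epsilon> \<circ>r ((\<mu> \<circ>r comult \<epsilon> \<mu>) ^^ g) \<circ>r \<eta>"

abbreviation Z_true :: "(unit \<times> unit) set" ("T\<^sub>Z")
  where "T\<^sub>Z \<equiv> {((),())}"

datatype X2 = A | B

definition m1 :: "X2 \<Rightarrow> X2 \<Rightarrow> X2 set" where
  "m1 x y = (case (x,y) of (A,A) \<Rightarrow> {A} | (A,B) \<Rightarrow> {B} | (B,A) \<Rightarrow> {B} | (B,B) \<Rightarrow> {A})"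
definition m2 :: "X2 \<Rightarrow> X2 \<Rightarrow> X2 set" where
  "m2 x y = (case (x,y) of (A,A) \<Rightarrow> {A} | (A,B) \<Rightarrow> {B} | (B,A) \<Rightarrow> {B} | (B,B) \<Rightarrow> {A,B})"
definition m3 :: "X2 \<Rightarrow> X2 \<Rightarrow> X2 set" where
  "m3 x y = (case (x,y) of (A,A) \<Rightarrow> {A} | (A,B) \<Rightarrow> {B} | (B,A) \<Rightarrow> {B} | (B,B) \<Rightarrow> {A})"
definition m4 :: "X2 \<Rightarrow> X2 \<Rightarrow> X2 set" where
  "m4 x y = (case (x,y) of (A,A) \<Rightarrow> {A} | (A,B) \<Rightarrow> {B} | (B,A) \<Rightarrow> {B} | (B,B) \<Rightarrow> {})"
definition m5 :: "X2 \<Rightarrow> X2 \<Rightarrow> X2 set" where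
  "m5 x y = (case (x,y) of (A,A) \<Rightarrow> {A} | (A,B) \<Rightarrow> {} | (B,A) \<Rightarrow> {} | (B,B) \<Rightarrow> {B})"

end

theory Submission
  imports Defs
begin

lemma all_X2: "(\<forall>x::X2. P x) = (P A \<and> P B)" by (metis X2.exhaust)
lemma ex_X2: "(\<exists>x::X2. P x) = (P A \<or> P B)" by (metis X2.exhaust)
lemma all_unit': "(\<forall>x::unit. P x) = P ()" by auto
lemma ex_unit': "(\<exists>x::unit. P x) = P ()" by auto
lemma mem_rcomp: "(a,c) \<in> S \<circ>r R \<longleftrightarrow> (\<exists>b. (a,b) \<in> R \<and> (b,c) \<in> S)" by (auto simp: rcomp_def)
lemma mem_tens: "((a,b),(c,d)) \<in> R \<otimes>r S \<longleftrightarrow> (a,c) \<in> R \<and> (b,d) \<in> S" by (auto simp: tens_def)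
lemma mem_assoc: "(((a,b),c),(d,e,f)) \<in> assoc \<longleftrightarrow> a=d \<and> b=e \<and> c=f" by (auto simp: assoc_def)
lemma mem_lunit: "((u,a),b) \<in> lunit \<longleftrightarrow> a=b" by (auto simp: lunit_def)
lemma mem_runit: "((a,u),b) \<in> runit \<longleftrightarrow> a=b" by (auto simp: runit_def)
lemma mem_unit_rel: "(u,a) \<in> unit_rel E \<longleftrightarrow> a \<in> E" by (auto simp: unit_rel_def)
lemma mem_counit_rel: "(a,u) \<in> counit_rel E \<longleftrightarrow> a \<in> E" by (auto simp: counit_rel_def)
lemma mem_mult_rel: "((a,b),c) \<in> mult_rel m \<longleftrightarrow> c \<in> m a b" by (auto simp: mult_rel_def)
lemmas R = mem_rcomp mem_tens mem_assoc mem_lunit mem_runit mem_unit_rel mem_counit_rel mem_mult_rel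
  converse_iff set_eq_iff split_paired_All split_paired_Ex all_X2 ex_X2 all_unit' ex_unit' pair_in_Id_conv

lemma nd: "nondeg_eqs (counit_rel E) (mult_rel m) \<beta> \<longleftrightarrow>
  (\<forall>x w. (x=w) \<longleftrightarrow> (\<exists>y u. ((),(y,w))\<in>\<beta> \<and> u \<in> m x y \<and> u\<in>E)) \<and>
  (\<forall>x y. (x=y) \<longleftrightarrow> (\<exists>w u. ((),(y,w))\<in>\<beta> \<and> u \<in> m w x \<and> u\<in>E))"
  unfolding nondeg_eqs_def set_eq_iff split_paired_All
  by (simp add: mem_rcomp mem_tens mem_assoc mem_lunit mem_runit mem_counit_rel mem_mult_rel split_paired_Ex converse_iff) blast

lemma unit_set_eq: "(\<beta>::(unit\<times>'a) set) = \<gamma> \<longleftrightarrow> (\<forall>p. ((),p)\<in>\<beta> \<longleftrightarrow> ((),p)\<in>\<gamma>)"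
  by (auto simp: set_eq_iff)




lemma frob_beta_eq: "(\<And>\<beta>. nondeg_eqs e m \<beta> \<longleftrightarrow> \<beta> = b) \<Longrightarrow> frob_beta e m = b"
  unfolding frob_beta_def by (rule the_equality) auto
lemma ex1_beta: "(\<And>\<beta>. nondeg_eqs e m \<beta> \<longleftrightarrow> \<beta> = b) \<Longrightarrow> \<exists>!\<beta>. nondeg_eqs e m \<beta>"
  by simp

lemma b1: "nondeg_eqs (counit_rel {A}) (mult_rel m1) \<beta> \<longleftrightarrow> \<beta> = {((),(A,A)),((),(B,B))}"
  unfolding nd unit_set_eq by (simp add: all_X2 ex_X2 m1_def split_paired_All) blast

lemma fr1: "frobenius_object (unit_rel {A}) (counit_rel {A}) (mult_rel m1)"
  unfolding frobenius_object_def using ex1_beta[OF b1] by (simp add: R m1_def)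

lemma H1: "mult_rel m1 \<circ>r comult (counit_rel {A}) (mult_rel m1) = Id"
  unfolding comult_def frob_beta_eq[OF b1] by (simp add: R m1_def)

lemma c1: "commutative_mult m1"
  unfolding commutative_mult_def m1_def by (simp add: all_X2)

lemma b2: "nondeg_eqs (counit_rel {A}) (mult_rel m2) \<beta> \<longleftrightarrow> \<beta> = {((),(A,A)),((),(B,B))}"
  unfolding nd unit_set_eq by (simp add: all_X2 ex_X2 m2_def split_paired_All) blast

lemma fr2: "frobenius_object (unit_rel {A}) (counit_rel {A}) (mult_rel m2)"
  unfolding frobenius_object_def using ex1_beta[OF b2] by (simp add: R m2_def)

lemma H2: "mult_rel m2 \<circ>r comult (counit_rel {A}) (mult_rel m2) = UNIV"
  unfolding comult_def frob_beta_eq[OF b2] by (simp add: R m2_def)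

lemma c2: "commutative_mult m2"
  unfolding commutative_mult_def m2_def by (simp add: all_X2)

lemma b3: "nondeg_eqs (counit_rel {B}) (mult_rel m3) \<beta> \<longleftrightarrow> \<beta> = {((),(A,B)),((),(B,A))}"
  unfolding nd unit_set_eq by (simp add: all_X2 ex_X2 m3_def split_paired_All) blast

lemma fr3: "frobenius_object (unit_rel {A}) (counit_rel {B}) (mult_rel m3)"
  unfolding frobenius_object_def using ex1_beta[OF b3] by (simp add: R m3_def)

lemma H3: "mult_rel m3 \<circ>r comult (counit_rel {B}) (mult_rel m3) = {(A,B),(B,A)}"
  unfolding comult_def frob_beta_eq[OF b3] by (simp add: R m3_def)

lemma c3: "commutative_mult m3"
  unfolding commutative_mult_def m3_def by (simp add: all_X2)

lemma b4: "nondeg_eqs (counit_rel {B}) (mult_rel m4) \<beta> \<longleftrightarrow> \<beta> = {((),(A,B)),((),(B,A))}"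
  unfolding nd unit_set_eq by (simp add: all_X2 ex_X2 m4_def split_paired_All) blast

lemma fr4: "frobenius_object (unit_rel {A}) (counit_rel {B}) (mult_rel m4)"
  unfolding frobenius_object_def using ex1_beta[OF b4] by (simp add: R m4_def)

lemma H4: "mult_rel m4 \<circ>r comult (counit_rel {B}) (mult_rel m4) = {(A,B)}"
  unfolding comult_def frob_beta_eq[OF b4] by (simp add: R m4_def)

lemma c4: "commutative_mult m4"
  unfolding commutative_mult_def m4_def by (simp add: all_X2)

lemma b5: "nondeg_eqs (counit_rel {A,B}) (mult_rel m5) \<beta> \<longleftrightarrow> \<beta> = {((),(A,A)),((),(B,B))}"
  unfolding nd unit_set_eq by (simp add: all_X2 ex_X2 m5_def split_paired_All) blast

lemma fr5: "frobenius_object (unit_rel {A,B}) (counit_rel {A,B}) (mult_rel m5)"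
  unfolding frobenius_object_def using ex1_beta[OF b5] by (simp add: R m5_def)

lemma H5: "mult_rel m5 \<circ>r comult (counit_rel {A,B}) (mult_rel m5) = Id"
  unfolding comult_def frob_beta_eq[OF b5] by (simp add: R m5_def)

lemma c5: "commutative_mult m5"
  unfolding commutative_mult_def m5_def by (simp add: all_X2)

lemma pow1: "(Id::(X2\<times>X2) set) ^^ g = Id" by (induction g) auto
lemma pow2: "(UNIV::(X2\<times>X2) set) ^^ g = (if g = 0 then Id else UNIV)" by (induction g) auto
lemma pow3: "{(A,B),(B,A)} ^^ g = (if even g then Id else {(A,B),(B,A)})"
proof (induction g)
  case (Suc g) then show ?case
    by (cases "even g") (auto simp: relcomp_unfold, (metis X2.exhaust)+)
qed simp
lemma pow4: "{(A,B)} ^^ g = (if g = 0 then Id else if g = 1 then {(A,B)} else {})"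
proof (induction g)
  case (Suc g) then show ?case by (cases g) (auto simp: relcomp_unfold)
qed simp

lemma Z1: "partition_fn (unit_rel {A}) (counit_rel {A}) (mult_rel m1) g = T\<^sub>Z"
  unfolding partition_fn_def H1 pow1 by (simp add: R)
lemma Z2: "partition_fn (unit_rel {A}) (counit_rel {A}) (mult_rel m2) g = T\<^sub>Z"
  unfolding partition_fn_def H2 pow2 by (simp add: R)
lemma Z3: "partition_fn (unit_rel {A}) (counit_rel {B}) (mult_rel m3) g = T\<^sub>Z \<longleftrightarrow> odd g"
  unfolding partition_fn_def H3 pow3 by (simp add: R)
lemma Z4: "partition_fn (unit_rel {A}) (counit_rel {B}) (mult_rel m4) g = T\<^sub>Z \<longleftrightarrow> g = 1"
  unfolding partition_fn_def H4 pow4 by (simp add: R)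
lemma Z5: "partition_fn (unit_rel {A,B}) (counit_rel {A,B}) (mult_rel m5) g = T\<^sub>Z"
  unfolding partition_fn_def H5 pow1 by (simp add: R)

theorem mainTheorem5:
  shows
  \<comment> \<open>(1)\<close>
  "(frobenius_object (unit_rel {A}) (counit_rel {A}) (mult_rel m1) \<and> commutative_mult m1
     \<and> (\<forall>g. partition_fn (unit_rel {A}) (counit_rel {A}) (mult_rel m1) g = T\<^sub>Z))
  \<comment> \<open>(2)\<close>
   \<and> (frobenius_object (unit_rel {A}) (counit_rel {A}) (mult_rel m2) \<and> commutative_mult m2
     \<and> (\<forall>g. partition_fn (unit_rel {A}) (counit_rel {A}) (mult_rel m2) g = T\<^sub>Z))
  \<comment> \<open>(3)\<close>
   \<and> (frobenius_object (unit_rel {A}) (counit_rel {B}) (mult_rel m3) \<and> commutative_mult m3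
     \<and> (\<forall>g. partition_fn (unit_rel {A}) (counit_rel {B}) (mult_rel m3) g = T\<^sub>Z \<longleftrightarrow> odd g))
  \<comment> \<open>(4)\<close>
   \<and> (frobenius_object (unit_rel {A}) (counit_rel {B}) (mult_rel m4) \<and> commutative_mult m4
     \<and> (\<forall>g. partition_fn (unit_rel {A}) (counit_rel {B}) (mult_rel m4) g = T\<^sub>Z \<longleftrightarrow> g = 1))
  \<comment> \<open>(5)\<close>
   \<and> (frobenius_object (unit_rel {A,B}) (counit_rel {A,B}) (mult_rel m5) \<and> commutative_mult m5
     \<and> (\<forall>g. partition_fn (unit_rel {A,B}) (counit_rel {A,B}) (mult_rel m5) g = T\<^sub>Z))"
  using fr1 fr2 fr3 fr4 fr5 c1 c2 c3 c4 c5 Z1 Z2 Z3 Z4 Z5 by blast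

end
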